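(* Consider the drop-and-shuffle Markov chain $\mathcal{M}$ described in the context (with $\bot$ absorbing), with parameters $r\ge1$ and $p_d\in(1-\frac{1}{\sqrt r},1]$. Then the mean hitting time $m_\varepsilon(\bot)$ (the expected number of states visited from $\varepsilon$ before reaching $\bot$) is finite and $$m_\varepsilon(\bot)=\frac{1+2(1-p_d)}{1-r(1-p_d)^2}.$$ Moreover, $m_s(\mathrm{Pop}(s))=m_\varepsilon(\bot)$ for every recursive sub-tree root $s$.
   Context: Fix an integer $r\ge1$ and a drop probability $p_d\in[0,1]$. Let $S_{\mathrm{Sel}}=\{[\,],\ [H|T],\ [\,][H|T],\ [H|T][\,]\}$ (four formal symbols) and let $S_{\mathrm{Com}}$ be the set of nonempty tuples $(y_1,\ldots,y_l)$, $1\le l\le r$, of pairwise distinct elements of $\{1,\ldots,r\}$. Pairs in $S_{\mathrm{Sel}}\times S_{\mathrm{Com}}$ are written $\langle x,y\rangle$. Let $W=(S_{\mathrm{Sel}}\times S_{\mathrm{Com}})^*$ be the set of finite words of such pairs, including the empty word $\varepsilon$. The state space is $W\cup\{w\cdot x: w\in W,\ x\in S_{\mathrm{Sel}}\}\cup\{\bot\}$, the initial state is $\varepsilon$. Define $\mathrm{Pop}$ recursively by $\mathrm{Pop}(\varepsilon)=\bot$, $\mathrm{Pop}(w\cdot[\,][H|T])=w\cdot[H|T]$, $\mathrm{Pop}(w\cdot[H|T][\,])=w\cdot[\,]$, $\mathrm{Pop}(w\cdot[\,])=\mathrm{Pop}(w)$, $\mathrm{Pop}(w\cdot[H|T])=\mathrm{Pop}(w)$,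 $\mathrm{Pop}(w\cdot\langle x,(y_1)\rangle)=\mathrm{Pop}(w\cdot x)$, and $\mathrm{Pop}(w\cdot\langle x,(y_1,y_2,\ldots,y_l)\rangle)=w\cdot\langle x,(y_2,\ldots,y_l)\rangle$ for $l\ge2$. Transition probabilities, for $w\in W$ (unlisted ones are $0$): from $w$, go to $w\cdot[H|T][\,]$ and to $w\cdot[\,][H|T]$ each with probability $(1-p_d)^2/2$, to $w\cdot[\,]$ and to $w\cdot[H|T]$ each with probability $p_d(1-p_d)$, and to $\mathrm{Pop}(w)$ with probability $p_d^2$; from $w\cdot x$ with $x\in\{[H|T],[H|T][\,]\}$, go to $w\cdot\langle x,(y_1,\ldots,y_l)\rangle$ with probability $p_d^{r-l}(1-p_d)^l/l!$ for each $(y_1,\ldots,y_l)\in S_{\mathrm{Com}}$, and to $\mathrm{Pop}(w\cdot x)$ with probability $p_d^r$; from $w\cdot x$ with $x\in\{[\,],[\,][H|T]\}$, go to $\mathrm{Pop}(w\cdot x)$ with probability $1$; and $p(\bot,\bot)=1$. (This models SLD resolution of a test-generating Prolog program in which, at each resolution step, each matching clause is independently dropped with probability $p_d$ and the remaining ones are uniformly shuffled.) A recursive sub-tree root is a state in $W\setminus\{\varepsilon\}$, i.e. of the form $w\cdot\langle x,y\rangle$. For states $a$ and $b$, $m_a(b)\in[0,\infty]$ is the expected value of $\inf\{n\ge0: X_n=b\}$ for the chain started at $X_0=a$. *)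

theory Defs
  imports "HOL-Probability.Probability"
begin

text \<open>Selection symbols: SNil = [], SHT = [H|T], SNilHT = [][H|T], SHTNil = [H|T][].\<close>
datatype sel = SNil | SHT | SNilHT | SHTNil

text \<open>A word w in W is stored as a list of pairs (x, y) in REVERSED order:
  the head of the list is the LAST (most recently appended) pair.\<close>
datatype state = Word "(sel \<times> nat list) list" | Partial "(sel \<times> nat list) list" sel | Bot

definition eps :: state where "eps = Word []"

definition valid_com :: "nat \<Rightarrow> nat list \<Rightarrow> bool" where
  "valid_com r y \<longleftrightarrow> y \<noteq> [] \<and> distinct y \<and> set y \<subseteq> {1..r}"

definition in_W :: "nat \<Rightarrow> (sel \<times> nat list) list \<Rightarrow> bool" where
  "in_W r w \<longleftrightarrow> (\<forall>(x, y) \<in> set w. valid_com r y)"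

text \<open>Pop on words (argument reversed, head = last pair).  The case of an empty
  tuple is outside W and is given an arbitrary value.\<close>
fun pop_word :: "(sel \<times> nat list) list \<Rightarrow> state" where
  "pop_word [] = Bot"
| "pop_word ((x, []) # w) = Bot"
| "pop_word ((x, [y1]) # w) =
     (case x of SNilHT \<Rightarrow> Partial w SHT
              | SHTNil \<Rightarrow> Partial w SNil
              | SNil \<Rightarrow> pop_word w
              | SHT \<Rightarrow> pop_word w)"
| "pop_word ((x, y1 # y2 # ys) # w) = Word ((x, y2 # ys) # w)"

fun Pop :: "state \<Rightarrow> state" where
  "Pop (Word w) = pop_word w"
| "Pop (Partial w SNilHT) = Partial w SHT"
| "Pop (Partial w SHTNil) = Partial w SNil"
| "Pop (Partial w SNil) = pop_word w"
| "Pop (Partial w SHT) = pop_word w"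
| "Pop Bot = Bot"

text \<open>Transition probability p(s, s') (contributions of coinciding targets are added).\<close>
fun trans_prob :: "nat \<Rightarrow> real \<Rightarrow> state \<Rightarrow> state \<Rightarrow> real" where
  "trans_prob r pd (Word w) s' =
     (if s' = Partial w SHTNil then (1 - pd)^2 / 2 else 0)
   + (if s' = Partial w SNilHT then (1 - pd)^2 / 2 else 0)
   + (if s' = Partial w SNil then pd * (1 - pd) else 0)
   + (if s' = Partial w SHT then pd * (1 - pd) else 0)
   + (if s' = pop_word w then pd^2 else 0)"
| "trans_prob r pd (Partial w x) s' =
     (if x = SHT \<or> x = SHTNil then
        (case s' of
           Word ((x', y) # w') \<Rightarrow>
             (if x' = x \<and> w' = w \<and> valid_com r y
              then pd ^ (r - length y) * (1 - pd) ^ length y / fact (length y) else 0)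
         | _ \<Rightarrow> 0)
        + (if s' = Pop (Partial w x) then pd ^ r else 0)
      else (if s' = Pop (Partial w x) then 1 else 0))"
| "trans_prob r pd Bot s' = (if s' = Bot then 1 else 0)"

definition K :: "nat \<Rightarrow> real \<Rightarrow> state \<Rightarrow> state pmf" where
  "K r pd s = embed_pmf (trans_prob r pd s)"

definition stop_step :: "nat \<Rightarrow> real \<Rightarrow> state \<Rightarrow> state \<Rightarrow> state pmf" where
  "stop_step r pd b x = (if x = b then return_pmf b else K r pd x)"

fun stopped_walk :: "nat \<Rightarrow> real \<Rightarrow> state \<Rightarrow> state \<Rightarrow> nat \<Rightarrow> state pmf" where
  "stopped_walk r pd b a 0 = return_pmf a"
| "stopped_walk r pd b a (Suc n) = stopped_walk r pd b a n \<bind> stop_step r pd b"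

text \<open>Mean hitting time m_a(b) = E[T_b] for T_b = inf {n \<ge> 0. X_n = b}, X_0 = a,
  via the tail-sum formula E[T] = sum_{n \<ge> 0} P(T > n); here P(T > n) is the
  probability that the chain stopped at b is not at b at time n.\<close>
definition mean_hit :: "nat \<Rightarrow> real \<Rightarrow> state \<Rightarrow> state \<Rightarrow> ennreal" where
  "mean_hit r pd a b =
     (\<Sum>n. ennreal (measure_pmf.prob (stopped_walk r pd b a n) (UNIV - {b})))"

text \<open>Recursive sub-tree roots: states of W \ {eps}.\<close>
definition rec_root :: "nat \<Rightarrow> state \<Rightarrow> bool" where
  "rec_root r s \<longleftrightarrow> (\<exists>x y w. s = Word ((x, y) # w) \<and> in_W r ((x, y) # w))"

end

theory Submission
  imports Defs
begin


definition fsum :: "'a pmf \<Rightarrow> ('a \<Rightarrow> real) \<Rightarrow> real" where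
  "fsum M f = (\<Sum>x\<in>set_pmf M. pmf M x * f x)"

definition tt :: "nat \<Rightarrow> real \<Rightarrow> state \<Rightarrow> state \<Rightarrow> nat \<Rightarrow> real" where
  "tt r pd b a n = measure_pmf.prob (stopped_walk r pd b a n) (UNIV - {b})"

lemma sw_first: "stopped_walk r pd b a (Suc n) = stop_step r pd b a \<bind> (\<lambda>a'. stopped_walk r pd b a' n)"
proof (induction n)
  case 0 then show ?case by (simp add: bind_return_pmf bind_return_pmf')
next
  case (Suc n)
  have "stopped_walk r pd b a (Suc (Suc n)) = stopped_walk r pd b a (Suc n) \<bind> stop_step r pd b" by simp
  also have "\<dots> = stop_step r pd b a \<bind> (\<lambda>a'. stopped_walk r pd b a' n \<bind> stop_step r pd b)"
    by (simp only: Suc bind_assoc_pmf)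
  finally show ?case by simp
qed

lemma sw_b: "stopped_walk r pd b b n = return_pmf b"
  by (induction n) (auto simp: stop_step_def bind_return_pmf)

lemma tt_b: "tt r pd b b n = 0"
  by (simp add: tt_def sw_b)

lemma tt_0: "a \<noteq> b \<Longrightarrow> tt r pd b a 0 = 1"
  by (simp add: tt_def)

lemma tt_nn: "0 \<le> tt r pd b a n" by (simp add: tt_def)

lemma tt_Suc:
  assumes "a \<noteq> b" "finite (set_pmf (K r pd a))"
  shows "tt r pd b a (Suc n) = fsum (K r pd a) (\<lambda>x. tt r pd b x n)"
proof -
  have "ennreal (tt r pd b a (Suc n)) = emeasure (measure_pmf (bind_pmf (K r pd a) (\<lambda>x. stopped_walk r pd b x n))) (UNIV - {b})"
    using assms by (simp only: tt_def sw_first) (simp add: stop_step_def measure_pmf.emeasure_eq_measure)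
  also have "\<dots> = (\<integral>\<^sup>+x. emeasure (stopped_walk r pd b x n) (UNIV - {b}) \<partial>K r pd a)"
    by simp
  also have "\<dots> = (\<Sum>x\<in>set_pmf (K r pd a). emeasure (stopped_walk r pd b x n) (UNIV - {b}) * pmf (K r pd a) x)"
    using assms by (simp add: nn_integral_measure_pmf_finite)
  also have "\<dots> = (\<Sum>x\<in>set_pmf (K r pd a). ennreal (pmf (K r pd a) x * tt r pd b x n))"
    by (intro sum.cong refl) (simp add: tt_def measure_pmf.emeasure_eq_measure ennreal_mult' mult.commute)
  also have "\<dots> = ennreal (fsum (K r pd a) (\<lambda>x. tt r pd b x n))"
    unfolding fsum_def by (rule sum_ennreal) (simp add: tt_nn)
  finally show ?thesis
    by (subst (asm) ennreal_inj) (auto simp: tt_nn fsum_def intro!: sum_nonneg)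
qed

lemma fsum_one: "finite (set_pmf M) \<Longrightarrow> fsum M (\<lambda>_. 1) = 1"
  unfolding fsum_def by (simp add: sum_pmf_eq_1)

lemma fsum_const: "finite (set_pmf M) \<Longrightarrow> fsum M (\<lambda>_. c) = c"
  unfolding fsum_def by (simp add: sum_distrib_right[symmetric] sum_pmf_eq_1)

lemma fsum_sum: "fsum M (\<lambda>x. \<Sum>k\<in>I. f k x) = (\<Sum>k\<in>I. fsum M (f k))"
  unfolding fsum_def by (simp add: sum_distrib_left sum.swap[of _ I])

lemma fsum_mono: "(\<And>x. x \<in> set_pmf M \<Longrightarrow> f x \<le> g x) \<Longrightarrow> fsum M f \<le> fsum M g"
  unfolding fsum_def by (intro sum_mono mult_left_mono) auto

lemma fsum_add: "fsum M (\<lambda>x. f x + g x) = fsum M f + fsum M g"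
  unfolding fsum_def by (simp add: distrib_left sum.distrib)

lemma fsum_cmult: "fsum M (\<lambda>x. c * f x) = c * fsum M f"
  unfolding fsum_def by (simp add: sum_distrib_left algebra_simps)

lemma fsum_diff: "fsum M (\<lambda>x. f x - g x) = fsum M f - fsum M g"
  unfolding fsum_def by (simp add: right_diff_distrib sum_subtractf)

lemma upper:
  assumes cl: "\<And>a. a \<in> S \<Longrightarrow> a \<noteq> b \<Longrightarrow> finite (set_pmf (K r pd a)) \<and> set_pmf (K r pd a) \<subseteq> S"
    and nn: "\<And>a. a \<in> S \<Longrightarrow> 0 \<le> G a"
    and sup: "\<And>a. a \<in> S \<Longrightarrow> a \<noteq> b \<Longrightarrow> 1 + fsum (K r pd a) G \<le> G a"
  shows "a \<in> S \<Longrightarrow> (\<Sum>k<n. tt r pd b a k) \<le> G a"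
proof (induction n arbitrary: a)
  case 0 then show ?case using nn by simp
next
  case (Suc n a)
  show ?case
  proof (cases "a = b")
    case True then show ?thesis using nn Suc by (simp add: tt_b)
  next
    case False
    have fin: "finite (set_pmf (K r pd a))" using cl Suc False by blast
    have "(\<Sum>k<Suc n. tt r pd b a k) = tt r pd b a 0 + (\<Sum>k<n. tt r pd b a (Suc k))"
      by (rule sum.lessThan_Suc_shift)
    also have "\<dots> = 1 + fsum (K r pd a) (\<lambda>x. \<Sum>k<n. tt r pd b x k)"
      using False fin by (simp add: tt_0 tt_Suc fsum_sum)
    also have "\<dots> \<le> 1 + fsum (K r pd a) G"
      using cl[OF Suc.prems False] by (auto intro!: fsum_mono Suc.IH)
    also have "\<dots> \<le> G a" using sup Suc False by blast
    finally show ?thesis .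
  qed
qed

lemma lower:
  assumes cl: "\<And>a. a \<in> S \<Longrightarrow> a \<noteq> b \<Longrightarrow> finite (set_pmf (K r pd a)) \<and> set_pmf (K r pd a) \<subseteq> S"
    and fb: "f b \<le> 0" and fU: "\<And>a. a \<in> S \<Longrightarrow> f a \<le> U" and U: "0 \<le> U"
    and sub: "\<And>a. a \<in> S \<Longrightarrow> a \<noteq> b \<Longrightarrow> f a \<le> 1 + fsum (K r pd a) f"
  shows "a \<in> S \<Longrightarrow> f a \<le> (\<Sum>k<n. tt r pd b a k) + U * tt r pd b a n"
proof (induction n arbitrary: a)
  case 0 then show ?case using fU fb by (cases "a = b") (auto simp: tt_0 tt_b)
next
  case (Suc n a)
  show ?case
  proof (cases "a = b")
    case True then show ?thesis using fb by (simp add: tt_b)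
  next
    case False
    have fin: "finite (set_pmf (K r pd a))" using cl Suc False by blast
    have "f a \<le> 1 + fsum (K r pd a) f" using sub Suc False by blast
    also have "\<dots> \<le> 1 + fsum (K r pd a) (\<lambda>x. (\<Sum>k<n. tt r pd b x k) + U * tt r pd b x n)"
      using cl[OF Suc.prems False] by (auto intro!: fsum_mono Suc.IH)
    also have "\<dots> = tt r pd b a 0 + (\<Sum>k<n. tt r pd b a (Suc k)) + U * tt r pd b a (Suc n)"
      using False fin by (simp add: tt_0 tt_Suc fsum_sum fsum_add fsum_cmult)
    also have "\<dots> = (\<Sum>k<Suc n. tt r pd b a k) + U * tt r pd b a (Suc n)"
      by (simp only: sum.lessThan_Suc_shift)
    finally show ?thesis .
  qed
qed


lemma superharm:
  assumes fin: "finite (set_pmf M)" and eq: "fsum M G = g0 - 1"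
    and jump: "\<And>x. x \<in> set_pmf M \<Longrightarrow> \<bar>G x - g0\<bar> \<le> B"
    and g0: "0 \<le> g0" and c: "c = B^2/2 + 1"
  shows "fsum M (\<lambda>x. (G x + c)^2) \<le> (g0 + c)^2"
proof -
  have "fsum M (\<lambda>x. (G x + c)^2) \<le> fsum M (\<lambda>x. (g0+c)^2 * 1 + 2*(g0+c) * G x - 2*(g0+c)*g0 + B^2 * 1)"
  proof (rule fsum_mono)
    fix x assume "x \<in> set_pmf M"
    then have jb: "\<bar>G x - g0\<bar> \<le> B" by (rule jump)
    have "(G x - g0)^2 \<le> B^2"
      using power_mono[OF jb abs_ge_zero, of 2] by simp
    moreover have "(G x + c)^2 = (g0+c)^2 + 2*(g0+c)*(G x - g0) + (G x - g0)^2"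
      by (simp add: power2_eq_square algebra_simps)
    moreover have "2*(g0+c)*(G x - g0) = 2*(g0+c) * G x - 2*(g0+c)*g0" by (simp add: right_diff_distrib)
    ultimately show "(G x + c)^2 \<le> (g0+c)^2 * 1 + 2*(g0+c) * G x - 2*(g0+c)*g0 + B^2 * 1"
      by linarith
  qed
  also have "\<dots> = (g0+c)^2 + 2*(g0+c) * (g0 - 1) - 2*(g0+c)*g0 + B^2"
    by (simp add: fsum_add fsum_diff fsum_cmult fsum_const fin eq)
  also have "\<dots> = (g0+c)^2 - 2*(g0+c) + B^2"
    by (simp add: algebra_simps)
  also have "\<dots> \<le> (g0 + c)^2" using g0 c by simp
  finally show ?thesis .
qed

lemma hit_exact:
  assumes cl: "\<And>a. a \<in> S \<Longrightarrow> a \<noteq> b \<Longrightarrow> finite (set_pmf (K r pd a)) \<and> set_pmf (K r pd a) \<subseteq> S"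
    and nn: "\<And>a. a \<in> S \<Longrightarrow> 0 \<le> G a" and Gb: "G b = 0"
    and eq: "\<And>a. a \<in> S \<Longrightarrow> a \<noteq> b \<Longrightarrow> fsum (K r pd a) G = G a - 1"
    and jump: "\<And>a x. a \<in> S \<Longrightarrow> a \<noteq> b \<Longrightarrow> x \<in> set_pmf (K r pd a) \<Longrightarrow> \<bar>G x - G a\<bar> \<le> B"
    and aS: "a \<in> S"
  shows "mean_hit r pd a b = ennreal (G a)"
proof -
  let ?t = "tt r pd b a"
  have ub: "sum ?t {..<n} \<le> G a" for n
    by (rule upper[OF cl nn _ aS]) (simp_all add: eq)
  have summ: "summable ?t"
    by (rule summableI_nonneg_bounded[OF tt_nn ub])
  have L_le: "suminf ?t \<le> G a" by (rule suminf_le_const[OF summ ub])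
  define c where "c = B^2/2 + 1"
  have cpos: "0 < c" unfolding c_def by (simp add: add_nonneg_pos)
  have lb: "G a - e * (G a + c)^2 \<le> suminf ?t" if e: "0 < e" for e
  proof -
    define f where "f x = G x - e * (G x + c)^2" for x
    have fle: "\<forall>n. f a \<le> sum ?t {..<n} + (1/(4*e)) * ?t n"
    proof
      fix n
      show "f a \<le> sum ?t {..<n} + (1/(4*e)) * ?t n"
      proof (rule lower[OF cl _ _ _ _ aS])
        show "f b \<le> 0" unfolding f_def Gb using e by simp
        show "0 \<le> 1 / (4 * e)" using e by simp
        fix x assume xS: "x \<in> S"
        have "0 \<le> (2*e*G x - 1)^2" by simp
        then have "4*e*(G x - e * (G x)^2) \<le> 1" by (simp add: power2_eq_square algebra_simps)
        moreover have "e * (G x)^2 \<le> e * (G x + c)^2"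
          using nn[OF xS] cpos e by (intro mult_left_mono power_mono) auto
        ultimately have "4*e*f x \<le> 1" unfolding f_def using e
          by (smt (verit) mult_left_mono)
        then show "f x \<le> 1 / (4 * e)" using e by (simp add: field_simps)
        assume xb: "x \<noteq> b"
        have fin: "finite (set_pmf (K r pd x))" using cl xS xb by blast
        have sh: "fsum (K r pd x) (\<lambda>y. (G y + c)^2) \<le> (G x + c)^2"
          by (rule superharm[OF fin eq[OF xS xb] jump[OF xS xb] nn[OF xS] c_def])
        have "1 + fsum (K r pd x) f = 1 + (G x - 1) - e * fsum (K r pd x) (\<lambda>y. (G y + c)^2)"
          unfolding f_def by (simp add: fsum_diff fsum_cmult eq[OF xS xb])
        also have "\<dots> \<ge> f x" unfolding f_def using sh e by (simp add: mult_left_mono)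
        finally show "f x \<le> 1 + fsum (K r pd x) f" .
      qed
    qed
    have lim: "(\<lambda>n. sum ?t {..<n} + (1/(4*e)) * ?t n) \<longlonglongrightarrow> suminf ?t + (1/(4*e)) * 0"
      by (intro tendsto_intros summable_LIMSEQ summ summable_LIMSEQ_zero)
    show ?thesis
      using LIMSEQ_le_const[OF lim] fle unfolding f_def by auto
  qed
  have Ga_le: "G a \<le> suminf ?t"
  proof (rule ccontr)
    assume "\<not> ?thesis"
    then have d: "0 < G a - suminf ?t" by simp
    define e where "e = (G a - suminf ?t) / (2 * (G a + c)^2)"
    have pos: "0 < (G a + c)^2" using nn[OF aS] cpos by simp
    have "0 < e" unfolding e_def using d pos by simp
    from lb[OF this] have "G a - (G a - suminf ?t)/2 \<le> suminf ?t"
      unfolding e_def using pos by simp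
    then show False using d by (simp add: field_simps)
  qed
  have "mean_hit r pd a b = (\<Sum>n. ennreal (?t n))"
    unfolding mean_hit_def tt_def by simp
  also have "\<dots> = ennreal (suminf ?t)" by (rule suminf_ennreal2[OF tt_nn summ])
  finally show ?thesis using L_le Ga_le by simp
qed



lemma card_len:
  assumes "l \<le> r"
  shows "card {xs. length xs = l \<and> distinct xs \<and> set xs \<subseteq> {1..r::nat}} = fact l * (r choose l)"
proof -
  have "card {xs. length xs = l \<and> distinct xs \<and> set xs \<subseteq> {1..r::nat}} = \<Prod>{r - l + 1 .. r}"
    using card_lists_distinct_length_eq[of "{1..r}" l] assms by simp
  moreover have "fact r = (fact (r - l) :: nat) * \<Prod>{Suc (r - l)..r}"
    by (rule fact_eq_fact_times) simp
  moreover have "fact l * fact (r - l) * (r choose l) = (fact r :: nat)"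
    by (rule binomial_fact_lemma[OF assms])
  ultimately show ?thesis
    by (metis (no_types, lifting) Suc_eq_plus1 fact_nonzero mult.assoc mult.commute mult_left_cancel)
qed

lemma valid_len: "valid_com r y \<Longrightarrow> length y \<le> r \<and> 1 \<le> length y"
proof -
  assume v: "valid_com r y"
  then have "length y = card (set y)" by (simp add: valid_com_def distinct_card)
  also have "\<dots> \<le> card {1..r}" using v unfolding valid_com_def by (intro card_mono) auto
  finally show ?thesis using v by (simp add: valid_com_def Suc_le_eq)
qed

lemma finite_valid: "finite {y. valid_com r y}"
proof -
  have "{y. valid_com r y} \<subseteq> {xs. set xs \<subseteq> {1..r} \<and> length xs \<le> r}"
    using valid_len unfolding valid_com_def by auto
  moreover have "finite {xs. set xs \<subseteq> {1..r} \<and> length xs \<le> r}"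
    by (rule finite_lists_length_le) simp
  ultimately show ?thesis by (rule finite_subset)
qed

lemma sum_by_len:
  fixes h :: "nat \<Rightarrow> real"
  shows "(\<Sum>y\<in>{y. valid_com r y}. h (length y)) = (\<Sum>l\<in>{1..r}. real (fact l * (r choose l)) * h l)"
proof -
  have "(\<Sum>y\<in>{y. valid_com r y}. h (length y)) =
        (\<Sum>l\<in>{1..r}. \<Sum>y\<in>{y\<in>{y. valid_com r y}. length y = l}. h (length y))"
    by (rule sum.group[symmetric]) (auto simp: finite_valid dest!: valid_len)
  also have "\<dots> = (\<Sum>l\<in>{1..r}. real (fact l * (r choose l)) * h l)"
  proof (rule sum.cong[OF refl])
    fix l assume l: "l \<in> {1..r}"
    have eq: "{y\<in>{y. valid_com r y}. length y = l} = {xs. length xs = l \<and> distinct xs \<and> set xs \<subseteq> {1..r}}"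
      using l by (auto simp: valid_com_def)
    have "(\<Sum>y\<in>{y\<in>{y. valid_com r y}. length y = l}. h (length y)) =
          (\<Sum>y\<in>{xs. length xs = l \<and> distinct xs \<and> set xs \<subseteq> {1..r}}. h l)"
      unfolding eq by (rule sum.cong) auto
    also have "\<dots> = real (fact l * (r choose l)) * h l"
    proof -
      have c: "card {xs. length xs = l \<and> distinct xs \<and> set xs \<subseteq> {1..r}} = fact l * (r choose l)"
        by (rule card_len) (use l in auto)
      show ?thesis unfolding sum_constant c by simp
    qed
    finally show "(\<Sum>y\<in>{y\<in>{y. valid_com r y}. length y = l}. h (length y)) = real (fact l * (r choose l)) * h l" .
  qed
  finally show ?thesis .
qed

definition pi_y :: "nat \<Rightarrow> real \<Rightarrow> nat list \<Rightarrow> real" where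
  "pi_y r pd y = pd ^ (r - length y) * (1 - pd) ^ length y / fact (length y)"

lemma sum_pi: "(\<Sum>y\<in>{y. valid_com r y}. pi_y r pd y) = 1 - pd ^ r"
proof -
  have "(\<Sum>y\<in>{y. valid_com r y}. pi_y r pd y) = (\<Sum>l\<in>{1..r}. real (fact l * (r choose l)) * (pd ^ (r - l) * (1 - pd) ^ l / fact l))"
    unfolding pi_y_def by (rule sum_by_len)
  also have "\<dots> = (\<Sum>l\<in>{1..r}. real (r choose l) * (1 - pd) ^ l * pd ^ (r - l))"
    by (rule sum.cong) (auto simp: field_simps)
  also have "\<dots> = (\<Sum>l\<le>r. real (r choose l) * (1 - pd) ^ l * pd ^ (r - l)) - pd ^ r"
  proof -
    have "{..r} = insert 0 {1..r}" by auto
    then show ?thesis by simp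
  qed
  also have "\<dots> = ((1 - pd) + pd) ^ r - pd ^ r" using binomial_ring[of "1 - pd" pd r] by simp
  finally show ?thesis by simp
qed

lemma sum_len_pi: "r \<ge> 1 \<Longrightarrow> (\<Sum>y\<in>{y. valid_com r y}. real (length y) * pi_y r pd y) = real r * (1 - pd)"
proof -
  assume "r \<ge> 1"
  then obtain r' where r': "r = Suc r'" by (cases r) auto
  have "(\<Sum>y\<in>{y. valid_com r y}. real (length y) * pi_y r pd y) = (\<Sum>l\<in>{1..r}. real (fact l * (r choose l)) * (real l * (pd ^ (r - l) * (1 - pd) ^ l / fact l)))"
    unfolding pi_y_def by (rule sum_by_len)
  also have "\<dots> = (\<Sum>l\<in>{Suc 0..Suc r'}. real (l * (r choose l)) * (1 - pd) ^ l * pd ^ (r - l))"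
    unfolding r' by (rule sum.cong) (auto simp: field_simps)
  also have "\<dots> = (\<Sum>k\<in>{0..r'}. real (Suc k * (Suc r' choose Suc k)) * (1 - pd) ^ Suc k * pd ^ (r' - k))"
    unfolding r' by (subst sum.shift_bounds_cl_Suc_ivl) simp
  also have "\<dots> = (\<Sum>k\<in>{0..r'}. real (Suc r') * (1 - pd) * (real (r' choose k) * (1 - pd) ^ k * pd ^ (r' - k)))"
    by (rule sum.cong[OF refl], subst Suc_times_binomial) (simp add: algebra_simps)
  also have "\<dots> = real (Suc r') * (1 - pd) * ((1 - pd) + pd) ^ r'"
    using binomial_ring[of "1 - pd" pd r'] by (simp add: atMost_atLeast0 flip: sum_distrib_left)
  finally show ?thesis using r' by simp
qed



lemma pop_len_W: "pop_word w = Word w' \<Longrightarrow> length w' \<le> length w \<and> w' \<noteq> w"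
  by (induction w arbitrary: w' rule: pop_word.induct) (auto split: sel.splits)

lemma pop_len_P: "pop_word w = Partial w' x \<Longrightarrow> length w' < length w"
  by (induction w arbitrary: w' x rule: pop_word.induct) (auto split: sel.splits)

lemma pw_ne [simp]:
  "pop_word w \<noteq> Partial w x" "Partial w x \<noteq> pop_word w"
  "pop_word w \<noteq> Word ((x, y) # w)" "Word ((x, y) # w) \<noteq> pop_word w"
  using pop_len_W[of w "(x, y) # w"] pop_len_P[of w w x] by auto

lemma K_fin:
  assumes A: "finite A" and sup: "\<And>z. trans_prob r pd a z \<noteq> 0 \<Longrightarrow> z \<in> A"
    and nn: "\<And>z. 0 \<le> trans_prob r pd a z" and s1: "(\<Sum>z\<in>A. trans_prob r pd a z) = 1"
  shows "set_pmf (K r pd a) \<subseteq> A" "finite (set_pmf (K r pd a))"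
    "fsum (K r pd a) g = (\<Sum>z\<in>A. trans_prob r pd a z * g z)"
proof -
  have int: "(\<integral>\<^sup>+z. ennreal (trans_prob r pd a z) \<partial>count_space UNIV) = 1"
  proof -
    have z: "z \<notin> A \<Longrightarrow> trans_prob r pd a z = 0" for z using sup by blast
    have "(\<integral>\<^sup>+z. ennreal (trans_prob r pd a z) \<partial>count_space UNIV) = (\<Sum>z\<in>A. ennreal (trans_prob r pd a z))"
      by (rule nn_integral_count_space') (use A z in auto)
    also have "\<dots> = 1" using s1 nn by simp
    finally show ?thesis .
  qed
  have pmf: "pmf (K r pd a) z = trans_prob r pd a z" for z
    unfolding K_def by (rule pmf_embed_pmf[OF nn int])
  have set: "set_pmf (K r pd a) = {z. trans_prob r pd a z \<noteq> 0}"
    unfolding K_def by (rule set_embed_pmf[OF nn int])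
  show sub: "set_pmf (K r pd a) \<subseteq> A" using set sup by auto
  then show "finite (set_pmf (K r pd a))" using A by (rule finite_subset)
  show "fsum (K r pd a) g = (\<Sum>z\<in>A. trans_prob r pd a z * g z)"
    unfolding fsum_def pmf
    by (rule sum.mono_neutral_left[OF A sub]) (auto simp: set)
qed


fun Cv :: "real \<Rightarrow> (sel \<times> nat list) list \<Rightarrow> real" where
  "Cv m [] = 0"
| "Cv m ((x, y) # v) = (real (length y) - 1) * m + (if x = SHTNil then 1 else 0) + Cv m v"

definition Dx :: "nat \<Rightarrow> real \<Rightarrow> real \<Rightarrow> sel \<Rightarrow> real" where
  "Dx r pd m x = (case x of SNil \<Rightarrow> 1 | SHT \<Rightarrow> 1 + r * (1 - pd) * m
      | SHTNil \<Rightarrow> 2 + r * (1 - pd) * m | SNilHT \<Rightarrow> 2 + r * (1 - pd) * m)"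

definition goodv :: "(sel \<times> nat list) list \<Rightarrow> bool" where
  "goodv v \<longleftrightarrow> (\<forall>(x, y) \<in> set v. (x = SHT \<or> x = SHTNil) \<and> y \<noteq> [])"

definition GG :: "nat \<Rightarrow> real \<Rightarrow> real \<Rightarrow> (sel \<times> nat list) list \<Rightarrow> state \<Rightarrow> real" where
  "GG r pd m u a = (if a = pop_word u then 0 else
     (case a of Word w \<Rightarrow> m + Cv m (take (length w - length u) w)
      | Partial w x \<Rightarrow> Dx r pd m x + Cv m (take (length w - length u) w)
      | Bot \<Rightarrow> 0))"

definition SS :: "(sel \<times> nat list) list \<Rightarrow> state set" where
  "SS u = {pop_word u} \<union> {Word (v @ u) | v. goodv v} \<union> {Partial (v @ u) x | v x. goodv v}"

lemma NE: "Word (v @ u) \<noteq> pop_word u" "Partial (v @ u) x \<noteq> pop_word u"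
proof -
  show "Word (v @ u) \<noteq> pop_word u"
  proof
    assume "Word (v @ u) = pop_word u"
    from pop_len_W[OF this[symmetric]] show False by auto
  qed
  show "Partial (v @ u) x \<noteq> pop_word u"
  proof
    assume "Partial (v @ u) x = pop_word u"
    from pop_len_P[OF this[symmetric]] show False by auto
  qed
qed

lemma GW: "GG r pd m u (Word (v @ u)) = m + Cv m v"
  by (simp add: GG_def NE)

lemma GP: "GG r pd m u (Partial (v @ u) x) = Dx r pd m x + Cv m v"
  by (simp add: GG_def NE)

lemma goodv_Cons: "goodv ((x, y) # v) \<longleftrightarrow> (x = SHT \<or> x = SHTNil) \<and> y \<noteq> [] \<and> goodv v"
  by (auto simp: goodv_def)

lemma Cv_nn: "goodv v \<Longrightarrow> 0 \<le> m \<Longrightarrow> 0 \<le> Cv m v"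
proof (induction v)
  case Nil then show ?case by simp
next
  case (Cons p v)
  obtain x y where p: "p = (x, y)" by fastforce
  have "1 \<le> length y" using Cons.prems p by (cases y) (auto simp: goodv_Cons)
  then have "0 \<le> (real (length y) - 1) * m" using Cons.prems by simp
  then show ?case using Cons p by (simp add: goodv_Cons)
qed

lemma W_in: "goodv v \<Longrightarrow> Word (v @ u) \<in> SS u" by (auto simp: SS_def)
lemma P_in: "goodv v \<Longrightarrow> Partial (v @ u) x \<in> SS u" by (auto simp: SS_def)

lemma POP: "goodv v \<Longrightarrow> pop_word (v @ u) \<in> SS u \<and> GG r pd m u (pop_word (v @ u)) = Cv m v"
proof (induction v)
  case Nil then show ?case by (simp add: SS_def GG_def)
next
  case (Cons p v)
  obtain x y where p: "p = (x, y)" by fastforce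
  have x: "x = SHT \<or> x = SHTNil" and y: "y \<noteq> []" and gv: "goodv v"
    using Cons.prems p by (auto simp: goodv_Cons)
  show ?case
  proof (cases y)
    case Nil then show ?thesis using y by simp
  next
    case (Cons y1 ys)
    show ?thesis
    proof (cases ys)
      case Nil
      show ?thesis
      proof (cases "x = SHT")
        case True
        then show ?thesis using Cons.IH[OF gv] p \<open>y = y1 # ys\<close> Nil by simp
      next
        case False
        then have "x = SHTNil" using x by simp
        then show ?thesis using P_in[OF gv] GP[of r pd m u v SNil] p \<open>y = y1 # ys\<close> Nil
          by (simp add: Dx_def)
      qed
    next
      case (Cons y2 zs)
      have g2: "goodv ((x, y2 # zs) # v)" using x gv by (simp add: goodv_Cons)
      have "pop_word (p # v @ u) = Word (((x, y2 # zs) # v) @ u)"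
        using p \<open>y = y1 # ys\<close> Cons by simp
      moreover have "GG r pd m u (Word (((x, y2 # zs) # v) @ u)) = Cv m (p # v)"
        unfolding GW using p \<open>y = y1 # ys\<close> Cons by (simp add: algebra_simps)
      ultimately show ?thesis using W_in[OF g2] by simp
    qed
  qed
qed


lemma Dx_bounds: "0 \<le> pd \<Longrightarrow> pd \<le> 1 \<Longrightarrow> 0 \<le> m \<Longrightarrow> 0 \<le> Dx r pd m x \<and> Dx r pd m x \<le> 2 + r * m"
proof -
  assume h: "0 \<le> pd" "pd \<le> 1" "0 \<le> m"
  have "real r * (1 - pd) \<le> real r" using h by (simp add: mult_left_le)
  then have "r * (1 - pd) * m \<le> r * 1 * m" using h by (intro mult_right_mono) auto
  moreover have "0 \<le> r * (1 - pd) * m" using h by simp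
  ultimately show ?thesis by (cases x) (auto simp: Dx_def)
qed

lemma band_jump: "C \<le> g1 \<Longrightarrow> g1 \<le> C + B \<Longrightarrow> C \<le> g2 \<Longrightarrow> g2 \<le> C + B \<Longrightarrow> \<bar>g1 - g2\<bar> \<le> (B::real)"
  by (simp add: abs_le_iff)

lemma step_Word:
  fixes pd m B :: real and r :: nat
  assumes pd0: "0 \<le> pd" and pd1: "pd \<le> 1" and m0: "0 \<le> m"
    and hm: "m = 1 + 2 * (1 - pd) + r * (1 - pd)^2 * m"
    and gv: "goodv v" and B: "B = (r + 2) * m + 3"
  shows "finite (set_pmf (K r pd (Word (v @ u)))) \<and> set_pmf (K r pd (Word (v @ u))) \<subseteq> SS u
     \<and> fsum (K r pd (Word (v @ u))) (GG r pd m u) = GG r pd m u (Word (v @ u)) - 1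
     \<and> (\<forall>z\<in>set_pmf (K r pd (Word (v @ u))). \<bar>GG r pd m u z - GG r pd m u (Word (v @ u))\<bar> \<le> B)"
proof -
  define w where "w = v @ u"
  define A where "A = {Partial w SHTNil, Partial w SNilHT, Partial w SNil, Partial w SHT, pop_word w}"
  define C where "C = Cv m v"
  have finA: "finite A" by (simp add: A_def)
  have sup: "z \<in> A" if "trans_prob r pd (Word w) z \<noteq> 0" for z
    using that by (auto simp: A_def split: if_splits)
  have nn: "0 \<le> trans_prob r pd (Word w) z" for z
    using pd0 pd1 by simp
  have s1: "(\<Sum>z\<in>A. trans_prob r pd (Word w) z) = 1"
    by (simp add: A_def power2_eq_square algebra_simps)
  note KF = K_fin[OF finA sup nn s1]
  have AS: "A \<subseteq> SS u"
    using POP[OF gv, where r=r and pd=pd and m=m and u=u] P_in[OF gv] by (auto simp: A_def w_def)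
  have Gpop: "GG r pd m u (pop_word w) = C" using POP[OF gv, where r=r and pd=pd and m=m and u=u] by (simp add: w_def C_def)
  have GPw: "GG r pd m u (Partial w x) = Dx r pd m x + C" for x by (simp add: w_def C_def GP)
  have "fsum (K r pd (Word w)) (GG r pd m u) = (\<Sum>z\<in>A. trans_prob r pd (Word w) z * GG r pd m u z)"
    by (rule KF(3))
  also have "\<dots> = (1 - pd)^2 / 2 * (Dx r pd m SHTNil + C) + (1 - pd)^2 / 2 * (Dx r pd m SNilHT + C)
      + pd * (1 - pd) * (Dx r pd m SNil + C) + pd * (1 - pd) * (Dx r pd m SHT + C) + pd^2 * C"
    by (simp add: A_def Gpop GPw)
  also have "\<dots> = C + (2 * (1 - pd) + r * (1 - pd)^2 * m)"
    by (simp add: Dx_def power2_eq_square algebra_simps)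
  also have "\<dots> = GG r pd m u (Word w) - 1"
    using hm by (simp add: w_def C_def GW)
  finally have E: "fsum (K r pd (Word w)) (GG r pd m u) = GG r pd m u (Word w) - 1" .
  have C0: "0 \<le> C" using Cv_nn[OF gv m0] by (simp add: C_def)
  have bandA: "C \<le> GG r pd m u z \<and> GG r pd m u z \<le> C + B" if "z \<in> A" for z
  proof -
    have rB: "2 + real r * m \<le> B" using m0 unfolding B by (simp add: algebra_simps)
    have "0 \<le> B" using rB m0 by (smt (verit) of_nat_0_le_iff mult_nonneg_nonneg)
    then show ?thesis using that Dx_bounds[OF pd0 pd1 m0] rB unfolding A_def
      by (auto simp: Gpop GPw) (smt (verit))+
  qed
  have banda: "C \<le> GG r pd m u (Word w) \<and> GG r pd m u (Word w) \<le> C + B"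
  proof -
    have "0 \<le> real r * m" using m0 by simp
    then show ?thesis using m0 unfolding B by (simp add: w_def C_def GW algebra_simps)
  qed
  have J: "\<forall>z\<in>set_pmf (K r pd (Word w)). \<bar>GG r pd m u z - GG r pd m u (Word w)\<bar> \<le> B"
    using KF(1) bandA banda band_jump by blast
  show ?thesis using KF(1,2) AS E J unfolding w_def by blast
qed


lemma trans_P_nw:
  assumes "\<And>x' y w'. s' = Word ((x', y) # w') \<Longrightarrow> w' \<noteq> w"
  shows "trans_prob r pd (Partial w x) s' = (if x = SHT \<or> x = SHTNil
      then (if s' = Pop (Partial w x) then pd^r else 0)
      else (if s' = Pop (Partial w x) then 1 else 0))"
proof (cases s')
  case (Word l) then show ?thesis using assms by (cases l) auto
qed auto

lemma trans_nn: "0 \<le> pd \<Longrightarrow> pd \<le> 1 \<Longrightarrow> 0 \<le> trans_prob r pd s z"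
  by (cases s; cases z) (auto split: list.splits prod.splits)

lemma PopNI: "x = SHT \<or> x = SHTNil \<Longrightarrow> Pop (Partial w x) \<noteq> Word ((x', y) # w)"
  by (cases x) auto

lemma Pop_nw: "x = SHT \<or> x = SHTNil \<Longrightarrow> Pop (Partial w x) = Word ((x', y) # w') \<Longrightarrow> w' \<noteq> w"
  using pop_len_W[of w "(x', y) # w'"] by (cases x) auto

lemma step_PS:
  fixes pd m B :: real and r :: nat
  assumes r1: "r \<ge> 1" and pd0: "0 \<le> pd" and pd1: "pd \<le> 1" and m0: "0 \<le> m"
    and gv: "goodv v" and B: "B = (r + 2) * m + 3" and x: "x = SHT \<or> x = SHTNil"
  shows "finite (set_pmf (K r pd (Partial (v @ u) x))) \<and> set_pmf (K r pd (Partial (v @ u) x)) \<subseteq> SS u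
     \<and> fsum (K r pd (Partial (v @ u) x)) (GG r pd m u) = GG r pd m u (Partial (v @ u) x) - 1
     \<and> (\<forall>z\<in>set_pmf (K r pd (Partial (v @ u) x)). \<bar>GG r pd m u z - GG r pd m u (Partial (v @ u) x)\<bar> \<le> B)"
proof -
  define w where "w = v @ u"
  define Y where "Y = {y. valid_com r y}"
  define A where "A = (\<lambda>y. Word ((x, y) # w)) ` Y \<union> {Pop (Partial w x)}"
  define C where "C = Cv m v"
  define R where "R = (if x = SHTNil then 1 else (0::real))"
  have finY: "finite Y" unfolding Y_def by (rule finite_valid)
  have finA: "finite A" by (simp add: A_def finY)
  have sumA: "(\<Sum>z\<in>A. F z) = (\<Sum>y\<in>Y. F (Word ((x, y) # w))) + F (Pop (Partial w x))" for F :: "state \<Rightarrow> real"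
  proof -
    have "Pop (Partial w x) \<notin> (\<lambda>y. Word ((x, y) # w)) ` Y" using PopNI[OF x] by auto
    moreover have "inj_on (\<lambda>y. Word ((x, y) # w)) Y" by (auto simp: inj_on_def)
    ultimately show ?thesis unfolding A_def
      by (simp add: finY sum.reindex sum.union_disjoint add.commute)
  qed
  have tW: "trans_prob r pd (Partial w x) (Word ((x, y) # w)) = pi_y r pd y" if "y \<in> Y" for y
    using that x PopNI[OF x, of w x y] by (auto simp: Y_def pi_y_def)
  have tP: "trans_prob r pd (Partial w x) (Pop (Partial w x)) = pd ^ r"
    by (subst trans_P_nw) (use x Pop_nw[OF x] in auto)
  have sup: "z \<in> A" if "trans_prob r pd (Partial w x) z \<noteq> 0" for z
  proof (rule ccontr)
    assume nz: "z \<notin> A"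
    then have "z \<noteq> Pop (Partial w x)" by (simp add: A_def)
    moreover have "\<not> (\<exists>y. z = Word ((x, y) # w) \<and> valid_com r y)" using nz by (auto simp: A_def Y_def)
    ultimately have "trans_prob r pd (Partial w x) z = 0" using x
      by (cases z) (auto split: list.splits)
    then show False using that by simp
  qed
  have nn: "0 \<le> trans_prob r pd (Partial w x) z" for z by (rule trans_nn[OF pd0 pd1])
  have s1: "(\<Sum>z\<in>A. trans_prob r pd (Partial w x) z) = 1"
    unfolding sumA using tW tP sum_pi[of r pd] by (simp add: Y_def)
  note KF = K_fin[OF finA sup nn s1]
  have gy: "goodv ((x, y) # v)" if "y \<in> Y" for y
    using that x gv by (auto simp: goodv_Cons Y_def valid_com_def)
  have GWy: "GG r pd m u (Word ((x, y) # w)) = real (length y) * m + R + C" for y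
    using GW[of r pd m u "(x, y) # v"] by (simp add: w_def C_def R_def algebra_simps)
  have GPop: "GG r pd m u (Pop (Partial w x)) = R + C \<and> Pop (Partial w x) \<in> SS u"
  proof (cases "x = SHT")
    case True then show ?thesis using POP[OF gv, where r=r and pd=pd and m=m and u=u]
      by (simp add: w_def C_def R_def)
  next
    case False then have "x = SHTNil" using x by simp
    then show ?thesis using GP[of r pd m u v SNil] P_in[OF gv, of u SNil]
      by (simp add: w_def C_def R_def Dx_def)
  qed
  have AS: "A \<subseteq> SS u"
    using GPop W_in[OF gy, of _ u] by (auto simp: A_def w_def)
  have "fsum (K r pd (Partial w x)) (GG r pd m u) = (\<Sum>z\<in>A. trans_prob r pd (Partial w x) z * GG r pd m u z)"
    by (rule KF(3))
  also have "\<dots> = (\<Sum>y\<in>Y. pi_y r pd y * (real (length y) * m + R + C)) + pd ^ r * (R + C)"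
    unfolding sumA using tW tP GPop GWy by simp
  also have "\<dots> = m * (\<Sum>y\<in>Y. real (length y) * pi_y r pd y) + (R + C) * (\<Sum>y\<in>Y. pi_y r pd y) + pd ^ r * (R + C)"
    by (simp add: sum_distrib_left sum.distrib algebra_simps)
  also have "\<dots> = m * (r * (1 - pd)) + (R + C)"
    unfolding Y_def sum_len_pi[OF r1] sum_pi by (simp add: algebra_simps)
  also have "\<dots> = GG r pd m u (Partial w x) - 1"
    using x by (auto simp: w_def C_def R_def GP Dx_def)
  finally have E: "fsum (K r pd (Partial w x)) (GG r pd m u) = GG r pd m u (Partial w x) - 1" .
  have rB: "2 + real r * m \<le> B" "0 \<le> real r * m" using m0 unfolding B by (simp_all add: algebra_simps)
  have R01: "0 \<le> R" "R \<le> 1" by (simp_all add: R_def)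
  have bandA: "C \<le> GG r pd m u z \<and> GG r pd m u z \<le> C + B" if zA: "z \<in> A" for z
  proof (cases "z = Pop (Partial w x)")
    case True then show ?thesis using GPop R01 rB by simp
  next
    case False
    then obtain y where y: "y \<in> Y" "z = Word ((x, y) # w)" using zA by (auto simp: A_def)
    have "length y \<le> r" using y valid_len by (auto simp: Y_def)
    then have "real (length y) * m \<le> real r * m" using m0 by (intro mult_right_mono) auto
    then show ?thesis using y GWy R01 rB m0 by simp
  qed
  have banda: "C \<le> GG r pd m u (Partial w x) \<and> GG r pd m u (Partial w x) \<le> C + B"
    using Dx_bounds[OF pd0 pd1 m0, of r x] rB by (simp add: w_def C_def GP)
  have J: "\<forall>z\<in>set_pmf (K r pd (Partial w x)). \<bar>GG r pd m u z - GG r pd m u (Partial w x)\<bar> \<le> B"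
    using KF(1) bandA banda band_jump by blast
  show ?thesis using KF(1,2) AS E J unfolding w_def by blast
qed


lemma step_PN:
  fixes pd m B :: real and r :: nat
  assumes pd0: "0 \<le> pd" and pd1: "pd \<le> 1" and m0: "0 \<le> m"
    and gv: "goodv v" and B: "B = (r + 2) * m + 3" and x: "x = SNil \<or> x = SNilHT"
  shows "finite (set_pmf (K r pd (Partial (v @ u) x))) \<and> set_pmf (K r pd (Partial (v @ u) x)) \<subseteq> SS u
     \<and> fsum (K r pd (Partial (v @ u) x)) (GG r pd m u) = GG r pd m u (Partial (v @ u) x) - 1
     \<and> (\<forall>z\<in>set_pmf (K r pd (Partial (v @ u) x)). \<bar>GG r pd m u z - GG r pd m u (Partial (v @ u) x)\<bar> \<le> B)"
proof -
  define w where "w = v @ u"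
  define A where "A = {Pop (Partial w x)}"
  define C where "C = Cv m v"
  have finA: "finite A" by (simp add: A_def)
  have nw: "Pop (Partial w x) = Word ((x', y) # w') \<Longrightarrow> w' \<noteq> w" for x' y w'
    using x pop_len_W[of w "(x', y) # w'"] by auto
  have tP: "trans_prob r pd (Partial w x) (Pop (Partial w x)) = 1"
    by (subst trans_P_nw) (use x nw in auto)
  have sup: "z \<in> A" if "trans_prob r pd (Partial w x) z \<noteq> 0" for z
    using that x by (auto simp: A_def split: if_splits)
  have nn: "0 \<le> trans_prob r pd (Partial w x) z" for z by (rule trans_nn[OF pd0 pd1])
  have s1: "(\<Sum>z\<in>A. trans_prob r pd (Partial w x) z) = 1" using tP by (simp add: A_def)
  note KF = K_fin[OF finA sup nn s1]
  have GPop: "GG r pd m u (Pop (Partial w x)) = Dx r pd m x + C - 1 \<and> Pop (Partial w x) \<in> SS u"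
  proof (cases "x = SNil")
    case True then show ?thesis using POP[OF gv, where r=r and pd=pd and m=m and u=u]
      by (simp add: w_def C_def Dx_def)
  next
    case False then have "x = SNilHT" using x by simp
    then show ?thesis using GP[of r pd m u v SHT] P_in[OF gv, of u SHT]
      by (simp add: w_def C_def Dx_def)
  qed
  have E: "fsum (K r pd (Partial w x)) (GG r pd m u) = GG r pd m u (Partial w x) - 1"
    using KF(3) tP GPop by (simp add: A_def w_def C_def GP)
  have rB: "2 + real r * m \<le> B" "0 \<le> real r * m" using m0 unfolding B by (simp_all add: algebra_simps)
  have C0: "0 \<le> C" using Cv_nn[OF gv m0] by (simp add: C_def)
  have D1: "Dx r pd m x \<ge> 1" using x Dx_bounds[OF pd0 pd1 m0, of r SHT] by (auto simp: Dx_def)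
  have banda: "C \<le> GG r pd m u (Partial w x) \<and> GG r pd m u (Partial w x) \<le> C + B"
    using Dx_bounds[OF pd0 pd1 m0, of r x] rB by (simp add: w_def C_def GP)
  have bandA: "C \<le> GG r pd m u z \<and> GG r pd m u z \<le> C + B" if "z \<in> A" for z
    using that GPop banda D1 by (auto simp: A_def w_def C_def GP)
  have J: "\<forall>z\<in>set_pmf (K r pd (Partial w x)). \<bar>GG r pd m u z - GG r pd m u (Partial w x)\<bar> \<le> B"
    using KF(1) bandA banda band_jump by blast
  have AS: "A \<subseteq> SS u" using GPop by (simp add: A_def)
  show ?thesis using KF(1,2) AS E J unfolding w_def by blast
qed

lemma main_u:
  fixes pd m :: real and r :: nat
  assumes r1: "r \<ge> 1" and pd0: "0 \<le> pd" and pd1: "pd \<le> 1" and m0: "0 \<le> m"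
    and hm: "m = 1 + 2 * (1 - pd) + r * (1 - pd)^2 * m"
  shows "mean_hit r pd (Word u) (pop_word u) = ennreal m"
proof -
  define B where "B = (r + 2) * m + 3"
  have step: "finite (set_pmf (K r pd a)) \<and> set_pmf (K r pd a) \<subseteq> SS u
     \<and> fsum (K r pd a) (GG r pd m u) = GG r pd m u a - 1
     \<and> (\<forall>z\<in>set_pmf (K r pd a). \<bar>GG r pd m u z - GG r pd m u a\<bar> \<le> B)"
    if "a \<in> SS u" "a \<noteq> pop_word u" for a
  proof -
    from that obtain v where gv: "goodv v" and
      cases: "a = Word (v @ u) \<or> (\<exists>x. a = Partial (v @ u) x)"
      by (auto simp: SS_def)
    show ?thesis
    proof (cases "a = Word (v @ u)")
      case True then show ?thesis using step_Word[OF pd0 pd1 m0 hm gv B_def] by simp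
    next
      case False
      then obtain x where a: "a = Partial (v @ u) x" using cases by blast
      show ?thesis
      proof (cases "x = SHT \<or> x = SHTNil")
        case True then show ?thesis using step_PS[OF r1 pd0 pd1 m0 gv B_def True] a by simp
      next
        case False then have "x = SNil \<or> x = SNilHT" by (cases x) auto
        then show ?thesis using step_PN[OF pd0 pd1 m0 gv B_def] a by simp
      qed
    qed
  qed
  have nn: "0 \<le> GG r pd m u a" if "a \<in> SS u" for a
  proof -
    from that have "a = pop_word u \<or> (\<exists>v. goodv v \<and> (a = Word (v @ u) \<or> (\<exists>x. a = Partial (v @ u) x)))"
      by (auto simp: SS_def)
    then show ?thesis
    proof
      assume "a = pop_word u" then show ?thesis by (simp add: GG_def)
    next
      assume "\<exists>v. goodv v \<and> (a = Word (v @ u) \<or> (\<exists>x. a = Partial (v @ u) x))"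
      then obtain v where gv: "goodv v" and c: "a = Word (v @ u) \<or> (\<exists>x. a = Partial (v @ u) x)" by blast
      have "0 \<le> Cv m v" by (rule Cv_nn[OF gv m0])
      then show ?thesis using c Dx_bounds[OF pd0 pd1 m0] m0 by (auto simp: GW GP)
    qed
  qed
  have aS: "Word u \<in> SS u" using W_in[of "[]" u] by (simp add: goodv_def)
  have "mean_hit r pd (Word u) (pop_word u) = ennreal (GG r pd m u (Word u))"
  proof (rule hit_exact[where S="SS u" and B=B and G="GG r pd m u"])
    show "GG r pd m u (pop_word u) = 0" by (simp add: GG_def)
  qed (use step nn aS in blast)+
  also have "GG r pd m u (Word u) = m" using GW[of r pd m u "[]"] by simp
  finally show ?thesis .
qed

theorem theorem3p8:
  fixes r :: nat and pd :: real
  assumes "r \<ge> 1" and "1 - 1 / sqrt (real r) < pd" and "pd \<le> 1"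
  shows "mean_hit r pd eps Bot < \<infinity>
    \<and> mean_hit r pd eps Bot = ennreal ((1 + 2 * (1 - pd)) / (1 - real r * (1 - pd)^2))
    \<and> (\<forall>s. rec_root r s \<longrightarrow> mean_hit r pd s (Pop s) = mean_hit r pd eps Bot)"
proof -
  have sq1: "1 \<le> sqrt (real r)" using assms(1) by simp
  then have "1 / sqrt (real r) \<le> 1" by simp
  then have pd0: "0 \<le> pd" using assms(2) by simp
  define q where "q = 1 - pd"
  have q0: "0 \<le> q" using assms(3) by (simp add: q_def)
  have qlt: "q < 1 / sqrt (real r)" using assms(2) by (simp add: q_def)
  have "q^2 < (1 / sqrt (real r))^2" by (rule power_strict_mono[OF qlt q0]) simp
  also have "\<dots> = 1 / real r" using assms(1) by (simp add: power_divide)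
  finally have "real r * q^2 < 1" using assms(1) by (simp add: field_simps)
  then have den: "0 < 1 - real r * q^2" by simp
  define m where "m = (1 + 2 * q) / (1 - real r * q^2)"
  have m0: "0 \<le> m" unfolding m_def using den q0 by simp
  have "m * (1 - real r * q^2) = 1 + 2 * q" unfolding m_def using den by simp
  then have hm: "m = 1 + 2 * (1 - pd) + r * (1 - pd)^2 * m" unfolding q_def by (simp add: algebra_simps)
  have M: "mean_hit r pd (Word u) (pop_word u) = ennreal m" for u
    by (rule main_u[OF assms(1) pd0 assms(3) m0 hm])
  have E: "mean_hit r pd eps Bot = ennreal m" using M[of "[]"] by (simp add: eps_def)
  have R: "mean_hit r pd s (Pop s) = mean_hit r pd eps Bot" if "rec_root r s" for s
  proof -
    from that obtain x y w where "s = Word ((x, y) # w)" by (auto simp: rec_root_def)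
    then show ?thesis using M[of "(x, y) # w"] E by simp
  qed
  show ?thesis using E R by (simp add: m_def q_def)
qed

end
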